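(* Let $G$ be an $X-Y$ normalized graph. Each sequence $(S_1,\dots,S_r)$ of pairwise disjoint non-empty subsets of $V(G)$ is the attribute of at most one compound witness (with respect to $X$ and $Y$ in $G$).
   Context: $G$ is a finite undirected graph, $X,Y$ disjoint subsets of $V(G)$; $N(C)=(\bigcup_{v\in C}N(v))\setminus C$. An $X-Y$ separator is a set $K \subseteq V(G) \setminus (X \cup Y)$ such that $G \setminus K$ has no path from $X$ to $Y$; minimal means inclusion-minimal. A graph $H$ is $X-Y$ normalized if $N(X)$ is the only minimum-cardinality $X-Y$ separator of $H$. In $H$, let $r_H$ be the minimum size of an $X-Y$ separator; the excess of an $X-Y$ separator $K$ is $|K|-r_H$. $NR(H,Y,K)$ is the set of vertices not reachable from $Y$ in $H\setminus K$; $K \geq K'$ means $NR(H,Y,K)\supseteq NR(H,Y,K')$, $K'<K$ means $K\ge K'$ and the $NR$ sets differ. A minimal $X-Y$ separator $K$ is important if there is no $X-Y$ separator $K'$ with $K<K'$ and $|K|\ge |K'|$. For $S\subseteq N(X)$ with no vertex adjacent to $Y$, the cover excess $CE(S)$ is the excess of a smallest $X-Y$ separator disjoint from $S$; a witness of $S$ is an $X-Y$ separator disjoint from $S$ with excess $CE(S)$; in a normalized graph there is a unique witness of $S$ that is an important $X-Y$ separator, denoted $K(S)$. $Pr(H,X,Y,K)$ is the graph obtained from $H\setminus (NR(H,Y,K)\setminus X)$ by making $X$ adjacent to all vertices of $K$ (for $K$ important, it is $X-Y$ normalized). Compound witness: for an $X-Y$ normalized graph $H$, a sequence $(S_1,\dots,S_r)$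 of pairwise disjoint non-empty vertex sets and an $X-Y$ separator $K$, $K$ is a compound witness of the attribute $(S_1,\dots,S_r)$ w.r.t. $X,Y$ in $H$ if: when $r=1$, $S_1\subseteq N(X)$ and $K=K(S_1)$; when $r>1$, $K(S_1)$ is defined (i.e. $S_1\subseteq N(X)$, not adjacent to $Y$), $S_2\cup\dots\cup S_r$ is disjoint from $N(X)$, and $K$ is a compound witness of $(S_2,\dots,S_r)$ w.r.t. $X,Y$ in $Pr(H,X,Y,K(S_1))$. The rank of $K$ is $|S_1|+\dots+|S_r|$. *)

theory Defs
  imports Main
begin

type_synonym 'a graph = "'a set \<times> ('a \<times> 'a) set"

definition verts :: "'a graph \<Rightarrow> 'a set" where "verts G = fst G"
definition edges :: "'a graph \<Rightarrow> ('a \<times> 'a) set" where "edges G = snd G"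

definition fin_graph :: "'a graph \<Rightarrow> bool" where
  "fin_graph G \<longleftrightarrow> finite (verts G) \<and> edges G \<subseteq> verts G \<times> verts G
     \<and> sym (edges G) \<and> irrefl (edges G)"

definition nbh :: "'a graph \<Rightarrow> 'a set \<Rightarrow> 'a set" where
  "nbh G C = {v. \<exists>u\<in>C. (u, v) \<in> edges G} - C"

definition reach :: "'a graph \<Rightarrow> 'a set \<Rightarrow> 'a set \<Rightarrow> 'a set" where
  "reach G Y K = {v. \<exists>y\<in>Y. y \<in> verts G - K \<and>
      (y, v) \<in> (edges G \<inter> ((verts G - K) \<times> (verts G - K)))\<^sup>*}"

definition NR :: "'a graph \<Rightarrow> 'a set \<Rightarrow> 'a set \<Rightarrow> 'a set" where
  "NR G Y K = (verts G - K) - reach G Y K"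

definition separator :: "'a graph \<Rightarrow> 'a set \<Rightarrow> 'a set \<Rightarrow> 'a set \<Rightarrow> bool" where
  "separator G X Y K \<longleftrightarrow> K \<subseteq> verts G - (X \<union> Y) \<and> X \<inter> reach G Y K = {}"

definition minimal_separator :: "'a graph \<Rightarrow> 'a set \<Rightarrow> 'a set \<Rightarrow> 'a set \<Rightarrow> bool" where
  "minimal_separator G X Y K \<longleftrightarrow> separator G X Y K \<and>
     (\<forall>K'. K' \<subset> K \<longrightarrow> \<not> separator G X Y K')"

definition sep_num :: "'a graph \<Rightarrow> 'a set \<Rightarrow> 'a set \<Rightarrow> nat" where
  "sep_num G X Y = Min {card K | K. separator G X Y K}"

definition normalized :: "'a graph \<Rightarrow> 'a set \<Rightarrow> 'a set \<Rightarrow> bool" where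
  "normalized G X Y \<longleftrightarrow> separator G X Y (nbh G X) \<and> card (nbh G X) = sep_num G X Y \<and>
     (\<forall>K. separator G X Y K \<and> card K = sep_num G X Y \<longrightarrow> K = nbh G X)"

definition excess :: "'a graph \<Rightarrow> 'a set \<Rightarrow> 'a set \<Rightarrow> 'a set \<Rightarrow> nat" where
  "excess G X Y K = card K - sep_num G X Y"

definition important :: "'a graph \<Rightarrow> 'a set \<Rightarrow> 'a set \<Rightarrow> 'a set \<Rightarrow> bool" where
  "important G X Y K \<longleftrightarrow> minimal_separator G X Y K \<and>
     \<not> (\<exists>K'. separator G X Y K' \<and> NR G Y K \<subset> NR G Y K' \<and> card K' \<le> card K)"

definition cover_excess :: "'a graph \<Rightarrow> 'a set \<Rightarrow> 'a set \<Rightarrow> 'a set \<Rightarrow> nat" where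
  "cover_excess G X Y S = Min {excess G X Y K | K. separator G X Y K \<and> K \<inter> S = {}}"

definition witness :: "'a graph \<Rightarrow> 'a set \<Rightarrow> 'a set \<Rightarrow> 'a set \<Rightarrow> 'a set \<Rightarrow> bool" where
  "witness G X Y S K \<longleftrightarrow> separator G X Y K \<and> K \<inter> S = {} \<and>
     excess G X Y K = cover_excess G X Y S"

definition KS_defined :: "'a graph \<Rightarrow> 'a set \<Rightarrow> 'a set \<Rightarrow> 'a set \<Rightarrow> bool" where
  "KS_defined G X Y S \<longleftrightarrow> S \<subseteq> nbh G X \<and> (\<forall>s\<in>S. \<forall>y\<in>Y. (s, y) \<notin> edges G)"

text \<open>K is K(S): the important witness of S (stated relationally; its uniqueness
  in normalized graphs is a fact of the paper, not built into the definition).\<close>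
definition is_KS :: "'a graph \<Rightarrow> 'a set \<Rightarrow> 'a set \<Rightarrow> 'a set \<Rightarrow> 'a set \<Rightarrow> bool" where
  "is_KS G X Y S K \<longleftrightarrow> KS_defined G X Y S \<and> witness G X Y S K \<and> important G X Y K"

definition Pr :: "'a graph \<Rightarrow> 'a set \<Rightarrow> 'a set \<Rightarrow> 'a set \<Rightarrow> 'a graph" where
  "Pr G X Y K = (let R = NR G Y K - X in
     (verts G - R,
      {(u, v) \<in> edges G. u \<notin> R \<and> v \<notin> R} \<union> (X \<times> K) \<union> (K \<times> X)))"

fun compound_witness :: "'a graph \<Rightarrow> 'a set \<Rightarrow> 'a set \<Rightarrow> 'a set list \<Rightarrow> 'a set \<Rightarrow> bool" where
  "compound_witness G X Y [] K = False"
| "compound_witness G X Y [S] K = is_KS G X Y S K"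
| "compound_witness G X Y (S # S' # Ss) K =
     (KS_defined G X Y S \<and> \<Union> (set (S' # Ss)) \<inter> nbh G X = {} \<and>
      (\<exists>K1. is_KS G X Y S K1 \<and> compound_witness (Pr G X Y K1) X Y (S' # Ss) K))"

end

theory Submission
  imports Defs
begin

lemma reach_subset: "reach G Y K \<subseteq> verts G - K"
proof
  fix v assume "v \<in> reach G Y K"
  then obtain y where y: "y \<in> verts G - K"
    "(y, v) \<in> (edges G \<inter> ((verts G - K) \<times> (verts G - K)))\<^sup>*"
    unfolding reach_def by blast
  from y(2) show "v \<in> verts G - K"
    by (cases rule: rtranclE) (use y(1) in auto)
qed

lemma reach_step: "u \<in> reach G Y K \<Longrightarrow> (u,v) \<in> edges G \<Longrightarrow> v \<in> verts G \<Longrightarrow> v \<notin> K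
   \<Longrightarrow> v \<in> reach G Y K"
proof -
  assume a: "u \<in> reach G Y K" "(u,v) \<in> edges G" "v \<in> verts G" "v \<notin> K"
  have u: "u \<in> verts G - K" using a(1) reach_subset[of G Y K] by (rule subsetD[rotated])
  from a(1) obtain y where y: "y \<in> Y" "y \<in> verts G - K"
    "(y, u) \<in> (edges G \<inter> ((verts G - K) \<times> (verts G - K)))\<^sup>*"
    unfolding reach_def by blast
  have e: "(u, v) \<in> edges G \<inter> ((verts G - K) \<times> (verts G - K))" using a u by simp
  have "(y, v) \<in> (edges G \<inter> ((verts G - K) \<times> (verts G - K)))\<^sup>*"
    by (rule rtrancl_into_rtrancl[OF y(3) e])
  thus ?thesis unfolding reach_def using y(1,2) by (intro CollectI bexI[of _ y] conjI)
qed

lemma reach_Y: "y \<in> Y \<Longrightarrow> y \<in> verts G \<Longrightarrow> y \<notin> K \<Longrightarrow> y \<in> reach G Y K"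
  unfolding reach_def by (intro CollectI bexI[of _ y] conjI rtrancl_refl) auto

lemma reach_induct:
  assumes base: "\<And>y. y \<in> Y \<Longrightarrow> y \<in> verts G - K \<Longrightarrow> y \<in> P"
    and step: "\<And>u v. u \<in> P \<Longrightarrow> u \<in> verts G - K \<Longrightarrow> v \<in> verts G - K \<Longrightarrow> (u,v) \<in> edges G \<Longrightarrow> v \<in> P"
  shows "reach G Y K \<subseteq> P"
proof
  fix v assume "v \<in> reach G Y K"
  then obtain y where y: "y \<in> Y" "y \<in> verts G - K"
    "(y, v) \<in> (edges G \<inter> ((verts G - K) \<times> (verts G - K)))\<^sup>*"
    unfolding reach_def by blast
  from y(3) show "v \<in> P"
  proof (induction rule: rtrancl_induct)
    case base then show ?case using y assms(1) by blast
  next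
    case (step u w) then show ?case using assms(2)[of u w] by blast
  qed
qed

lemma NR_mem: "v \<in> NR G Y K \<longleftrightarrow> v \<in> verts G \<and> v \<notin> K \<and> v \<notin> reach G Y K"
  by (auto simp: NR_def)

lemma cap_sep:
  assumes s1: "separator G X Y K1" and s2: "separator G X Y K2"
  shows "separator G X Y ((K1 \<inter> K2) \<union> (K1 \<inter> NR G Y K2) \<union> (K2 \<inter> NR G Y K1))"
  (is "separator G X Y ?Kc")
proof -
  have s1': "K1 \<subseteq> verts G - (X \<union> Y)" "X \<inter> reach G Y K1 = {}" using s1 unfolding separator_def by auto
  have s2': "K2 \<subseteq> verts G - (X \<union> Y)" "X \<inter> reach G Y K2 = {}" using s2 unfolding separator_def by auto
  have sub: "?Kc \<subseteq> verts G - (X \<union> Y)" using s1' s2' by auto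
  have r: "reach G Y ?Kc \<subseteq> - (NR G Y K1 \<inter> NR G Y K2)"
  proof (rule reach_induct)
    fix y assume y: "y \<in> Y" "y \<in> verts G - ?Kc"
    show "y \<in> - (NR G Y K1 \<inter> NR G Y K2)"
    proof
      assume "y \<in> NR G Y K1 \<inter> NR G Y K2"
      hence "y \<notin> K1" "y \<notin> reach G Y K1" by (simp_all add: NR_mem)
      thus False using reach_Y[of y Y G K1] y by simp
    qed
  next
    fix u v assume a: "u \<in> - (NR G Y K1 \<inter> NR G Y K2)" "u \<in> verts G - ?Kc"
      "v \<in> verts G - ?Kc" "(u, v) \<in> edges G"
    show "v \<in> - (NR G Y K1 \<inter> NR G Y K2)"
    proof
      assume v: "v \<in> NR G Y K1 \<inter> NR G Y K2"
      hence v1: "v \<notin> K1" "v \<notin> reach G Y K1" "v \<notin> K2" "v \<notin> reach G Y K2" "v \<in> verts G"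
        by (simp_all add: NR_mem)
      have "u \<notin> reach G Y K1" using reach_step[of u G Y K1 v] a(4) v1 by auto
      moreover have "u \<notin> reach G Y K2" using reach_step[of u G Y K2 v] a(4) v1 by auto
      moreover have uv: "u \<in> verts G" "u \<notin> ?Kc" using a(2) by auto
      ultimately have n1: "u \<notin> K1 \<Longrightarrow> u \<in> NR G Y K1" and n2: "u \<notin> K2 \<Longrightarrow> u \<in> NR G Y K2"
        by (simp_all add: NR_mem)
      show False
      proof (cases "u \<in> K1")
        case True
        then show False using n2 uv(2) by blast
      next
        case False
        then show False using n1 n2 uv(2) a(1) by blast
      qed
    qed
  qed
  have "X \<inter> reach G Y ?Kc = {}"
  proof (rule ccontr)
    assume "X \<inter> reach G Y ?Kc \<noteq> {}"
    then obtain x where x: "x \<in> X" "x \<in> reach G Y ?Kc" by blast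
    have xv: "x \<in> verts G" using x(2) reach_subset[of G Y ?Kc] by (meson DiffD1 subsetD)
    have s1': "K1 \<subseteq> verts G - (X \<union> Y)" "X \<inter> reach G Y K1 = {}" using s1 unfolding separator_def by auto
    have s2': "K2 \<subseteq> verts G - (X \<union> Y)" "X \<inter> reach G Y K2 = {}" using s2 unfolding separator_def by auto
    have "x \<notin> K1" "x \<notin> K2" "x \<notin> reach G Y K1" "x \<notin> reach G Y K2"
      using x(1) s1' s2' by auto
    hence "x \<in> NR G Y K1 \<inter> NR G Y K2" using xv unfolding NR_def by simp
    thus False using r x by blast
  qed
  thus ?thesis using sub by (simp add: separator_def)
qed

lemma cup_sep:
  assumes s1: "separator G X Y K1" and s2: "separator G X Y K2"
  shows "separator G X Y ((K1 \<inter> K2) \<union> (K1 \<inter> reach G Y K2) \<union> (K2 \<inter> reach G Y K1))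
     \<and> NR G Y K1 \<union> NR G Y K2 \<subseteq> NR G Y ((K1 \<inter> K2) \<union> (K1 \<inter> reach G Y K2) \<union> (K2 \<inter> reach G Y K1))"
  (is "separator G X Y ?Ku \<and> _")
proof -
  have sub: "?Ku \<subseteq> verts G - (X \<union> Y)" using s1 s2 unfolding separator_def by blast
  have r: "reach G Y ?Ku \<subseteq> reach G Y K1 \<inter> reach G Y K2"
  proof (rule reach_induct)
    fix y assume "y \<in> Y" "y \<in> verts G - ?Ku"
    then show "y \<in> reach G Y K1 \<inter> reach G Y K2"
      using reach_Y[of y Y G K1] reach_Y[of y Y G K2] s1 s2 unfolding separator_def by blast
  next
    fix u v assume a: "u \<in> reach G Y K1 \<inter> reach G Y K2" "u \<in> verts G - ?Ku"
      "v \<in> verts G - ?Ku" "(u, v) \<in> edges G"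
    have "v \<notin> K1"
    proof
      assume "v \<in> K1"
      hence "v \<notin> K2" using a by blast
      hence "v \<in> reach G Y K2" using reach_step[of u G Y K2 v] a by blast
      thus False using a \<open>v \<in> K1\<close> by blast
    qed
    moreover have "v \<notin> K2"
    proof
      assume "v \<in> K2"
      hence "v \<notin> K1" using a by blast
      hence "v \<in> reach G Y K1" using reach_step[of u G Y K1 v] a by blast
      thus False using a \<open>v \<in> K2\<close> by blast
    qed
    ultimately show "v \<in> reach G Y K1 \<inter> reach G Y K2"
      using reach_step[of u G Y K1 v] reach_step[of u G Y K2 v] a by blast
  qed
  have "X \<inter> reach G Y K1 = {}" using s1 by (simp add: separator_def)
  hence "X \<inter> reach G Y ?Ku = {}" using r by blast
  hence "separator G X Y ?Ku" using sub by (simp add: separator_def)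
  moreover have "NR G Y K1 \<union> NR G Y K2 \<subseteq> NR G Y ?Ku"
    using r unfolding NR_def by blast
  ultimately show ?thesis by blast
qed

lemma fin_sep_cards:
  assumes "finite (verts G)"
  shows "finite {card K | K. separator G X Y K}"
    "finite {excess G X Y K | K. separator G X Y K \<and> K \<inter> S = {}}"
proof -
  have fp: "finite (Pow (verts G))" using assms by simp
  have "{card K | K. separator G X Y K} \<subseteq> card ` Pow (verts G)"
  proof
    fix n assume "n \<in> {card K | K. separator G X Y K}"
    then obtain K where "n = card K" "separator G X Y K" by blast
    moreover have "K \<subseteq> verts G" using \<open>separator G X Y K\<close> unfolding separator_def by auto
    ultimately show "n \<in> card ` Pow (verts G)" by auto
  qed
  thus "finite {card K | K. separator G X Y K}" by (rule finite_surj[OF fp])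
  have "{excess G X Y K | K. separator G X Y K \<and> K \<inter> S = {}} \<subseteq> excess G X Y ` Pow (verts G)"
  proof
    fix n assume "n \<in> {excess G X Y K | K. separator G X Y K \<and> K \<inter> S = {}}"
    then obtain K where "n = excess G X Y K" "separator G X Y K" by blast
    moreover have "K \<subseteq> verts G" using \<open>separator G X Y K\<close> unfolding separator_def by auto
    ultimately show "n \<in> excess G X Y ` Pow (verts G)" by auto
  qed
  thus "finite {excess G X Y K | K. separator G X Y K \<and> K \<inter> S = {}}" by (rule finite_surj[OF fp])
qed

lemma KS_one_dir:
  assumes fin: "finite (verts G)"
    and k1: "is_KS G X Y S K1" and k2: "is_KS G X Y S K2"
  shows "NR G Y K2 \<subseteq> NR G Y K1"
proof -
  have s1: "separator G X Y K1" and s2: "separator G X Y K2"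
    using k1 k2 unfolding is_KS_def witness_def by auto
  have fK1: "finite K1" and fK2: "finite K2"
    using s1 s2 fin unfolding separator_def by (auto intro: finite_subset)
  define Kc where "Kc = (K1 \<inter> K2) \<union> (K1 \<inter> NR G Y K2) \<union> (K2 \<inter> NR G Y K1)"
  define Ku where "Ku = (K1 \<inter> K2) \<union> (K1 \<inter> reach G Y K2) \<union> (K2 \<inter> reach G Y K1)"
  have sc: "separator G X Y Kc" unfolding Kc_def by (rule cap_sep[OF s1 s2])
  have su: "separator G X Y Ku" and nru: "NR G Y K1 \<union> NR G Y K2 \<subseteq> NR G Y Ku"
    using cup_sep[OF s1 s2] unfolding Ku_def by auto
  have scS: "Kc \<inter> S = {}" using k1 k2 unfolding is_KS_def witness_def Kc_def by blast
  define r where "r = sep_num G X Y"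
  have r1: "r \<le> card K1" unfolding r_def sep_num_def
    using fin_sep_cards(1)[OF fin, of X Y] s1 by (auto intro: Min_le)
  have r2: "r \<le> card K2" unfolding r_def sep_num_def
    using fin_sep_cards(1)[OF fin, of X Y] s2 by (auto intro: Min_le)
  have ce: "cover_excess G X Y S \<le> excess G X Y Kc" unfolding cover_excess_def
    using fin_sep_cards(2)[OF fin, of X Y S] sc scS by (auto intro: Min_le)
  have e1: "excess G X Y K1 = cover_excess G X Y S" and e2: "excess G X Y K2 = cover_excess G X Y S"
    using k1 k2 unfolding is_KS_def witness_def by auto
  have c12: "card K1 = card K2" using e1 e2 r1 r2 unfolding excess_def r_def by simp
  have r3: "r \<le> card Kc" unfolding r_def sep_num_def
    using fin_sep_cards(1)[OF fin, of X Y] sc by (auto intro: Min_le)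
  have cc: "card K1 \<le> card Kc" using ce e1 r1 r3 unfolding excess_def r_def by simp
  have NR_dis: "\<And>K. NR G Y K \<inter> K = {}" "\<And>K. NR G Y K \<inter> reach G Y K = {}"
    unfolding NR_def by auto
  have un: "Kc \<union> Ku = K1 \<union> K2" unfolding Kc_def Ku_def NR_def
    using s1 s2 unfolding separator_def by blast
  have int: "Kc \<inter> Ku = K1 \<inter> K2" unfolding Kc_def Ku_def using NR_dis by blast
  have fKc: "finite Kc" and fKu: "finite Ku" unfolding Kc_def Ku_def using fK1 fK2 by auto
  have "card Kc + card Ku = card K1 + card K2"
    using card_Un_Int[OF fKc fKu] card_Un_Int[OF fK1 fK2] un int by simp
  hence cu: "card Ku \<le> card K1" using cc c12 by simp
  have "\<not> (NR G Y K1 \<subset> NR G Y Ku)" using k1 su cu unfolding is_KS_def important_def by blast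
  hence "NR G Y Ku = NR G Y K1" using nru by blast
  thus ?thesis using nru by blast
qed

lemma KS_unique:
  assumes fin: "finite (verts G)"
    and k1: "is_KS G X Y S K1" and k2: "is_KS G X Y S K2"
  shows "K1 = K2"
proof -
  have eq: "NR G Y K1 = NR G Y K2" using KS_one_dir[OF fin k1 k2] KS_one_dir[OF fin k2 k1] by blast
  have s1: "separator G X Y K1" and s2: "separator G X Y K2"
    using k1 k2 unfolding is_KS_def witness_def by auto
  have NR_dis: "\<And>K. NR G Y K \<inter> K = {}" unfolding NR_def by auto
  have "(K1 \<inter> K2) \<union> (K1 \<inter> NR G Y K2) \<union> (K2 \<inter> NR G Y K1) = K1 \<inter> K2"
    using eq NR_dis by blast
  hence sI: "separator G X Y (K1 \<inter> K2)" using cap_sep[OF s1 s2] by simp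
  have m1: "\<not> (K1 \<inter> K2 \<subset> K1)" using k1 sI unfolding is_KS_def important_def minimal_separator_def by blast
  have m2: "\<not> (K1 \<inter> K2 \<subset> K2)" using k2 sI unfolding is_KS_def important_def minimal_separator_def by blast
  show ?thesis using m1 m2 by blast
qed

lemma cw_unique:
  "finite (verts G) \<Longrightarrow> compound_witness G X Y Ss K1 \<Longrightarrow> compound_witness G X Y Ss K2 \<Longrightarrow> K1 = K2"
proof (induction Ss arbitrary: G K1 K2)
  case Nil then show ?case by simp
next
  case (Cons S Ss)
  show ?case
  proof (cases Ss)
    case Nil then show ?thesis using Cons.prems KS_unique[of G X Y S K1 K2] by simp
  next
    case (Cons S' Ss')
    from Cons.prems(2) obtain A where A: "is_KS G X Y S A" "compound_witness (Pr G X Y A) X Y Ss K1"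
      using Cons by auto
    from Cons.prems(3) obtain B where B: "is_KS G X Y S B" "compound_witness (Pr G X Y B) X Y Ss K2"
      using Cons by auto
    have "A = B" using KS_unique[OF Cons.prems(1) A(1) B(1)] .
    moreover have "finite (verts (Pr G X Y A))" using Cons.prems(1)
      unfolding Pr_def verts_def Let_def by simp
    ultimately show ?thesis using Cons.IH A B by blast
  qed
qed

theorem corollary2:
  fixes G :: "'a graph" and X Y :: "'a set" and Ss :: "'a set list"
  assumes "fin_graph G"
    and "X \<subseteq> verts G" and "Y \<subseteq> verts G" and "X \<inter> Y = {}"
    and "normalized G X Y"
    and "\<forall>i < length Ss. Ss ! i \<noteq> {} \<and> Ss ! i \<subseteq> verts G"
    and "\<forall>i < length Ss. \<forall>j < length Ss. i \<noteq> j \<longrightarrow> Ss ! i \<inter> Ss ! j = {}"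
  shows "\<forall>K1 K2. compound_witness G X Y Ss K1 \<and> compound_witness G X Y Ss K2 \<longrightarrow> K1 = K2"
  using cw_unique assms(1) unfolding fin_graph_def by blast

end
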